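(* The GP 2 program is-dag terminates on any GP 2 host graph in which every node is marked grey and is not a root and every edge is unmarked.
   Context: GP 2 semantics. Host graphs are finite directed graphs whose nodes and edges carry labels (lists of integers and strings) and marks (nodes: unmarked, red, green, blue, grey; edges: unmarked, red, green, blue, dashed); some nodes are roots. A rule is applied by finding an injective label- and mark-compatible match of its left-hand side (mark "any" matches every mark; roots match roots) satisfying the dangling condition, then changing matched items as prescribed by the right-hand side. Commands: a rule set call applies one applicable rule, failing if none applies; $P;Q$ sequencing; $P!$ iterates $P$ until it fails (break exits the innermost loop); "try $C$ then $P$ else $Q$" runs $C$ and continues with $P$ on its result if it succeeded, else $Q$ on the original graph; "if $C$ then $P$ else $Q$" runs $C$ on a copy then $P$ or $Q$ on the original; fail causes failure. The program is-dag (labels unchanged; rule edges directed from node 1 to node 2): Main = (init; DFS!; try unroot else break)!; Check DFS = try next_edge then (try {move, ignore} else (set_flag; break)) else (try loop; try back else break) Check = if flag then fail - init: grey non-root node becomes a red root. - unroot: red root becomes blue non-root. - set_flag: red root becomes green root. - flag: green root; no change. - next_edge: red root 1, node 2 of any mark, unmarked edge 1→2; edge becomes red. - ignore: red root 1, blue node 2, red edge 1→2; edge becomes blue. - move: red root 1, grey node 2, red edge 1→2; node 1 becomes red non-root, node 2 red root, edge dashed. - back: red non-root 1, red root 2, dashed edge 1→2; node 1 becomes red root, node 2 blue non-root, edge blue. - loop: red root with an unmarked loop; node becomes green root. *)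

theory Defs
  imports Main
begin

datatype atom = AInt int | AStr string
type_synonym label = "atom list"

datatype nodemark = NUnmarked | NRed | NGreen | NBlue | NGrey
datatype edgemark = EUnmarked | ERed | EGreen | EBlue | EDashed

text \<open>Host graphs: node and edge identifiers are natural numbers; the functions
  are only meaningful on the node set V and edge set E.\<close>
record hostgraph =
  V :: "nat set"
  E :: "nat set"
  src :: "nat \<Rightarrow> nat"
  tgt :: "nat \<Rightarrow> nat"
  nlab :: "nat \<Rightarrow> label"
  elab :: "nat \<Rightarrow> label"
  nmark :: "nat \<Rightarrow> nodemark"
  emark :: "nat \<Rightarrow> edgemark"
  isroot :: "nat \<Rightarrow> bool"

definition wf_graph :: "hostgraph \<Rightarrow> bool" where
  "wf_graph G \<longleftrightarrow> finite (V G) \<and> finite (E G) \<and>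
     (\<forall>e\<in>E G. src G e \<in> V G \<and> tgt G e \<in> V G)"

definition set_nm :: "nat \<Rightarrow> nodemark \<Rightarrow> hostgraph \<Rightarrow> hostgraph" where
  "set_nm v m G = G\<lparr>nmark := (nmark G)(v := m)\<rparr>"

definition set_root :: "nat \<Rightarrow> bool \<Rightarrow> hostgraph \<Rightarrow> hostgraph" where
  "set_root v b G = G\<lparr>isroot := (isroot G)(v := b)\<rparr>"

definition set_em :: "nat \<Rightarrow> edgemark \<Rightarrow> hostgraph \<Rightarrow> hostgraph" where
  "set_em e m G = G\<lparr>emark := (emark G)(e := m)\<rparr>"

text \<open>Each rule only relabels marks / root flags of matched items (labels are
  variables and unchanged; nothing is created or deleted, so the dangling
  condition holds trivially). A root node of the left-hand side only matches
  a root; a non-root LHS node matches any host node. Matches are injective,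
  so distinct rule nodes 1 and 2 are mapped to distinct host nodes.\<close>

definition r_init :: "hostgraph \<Rightarrow> hostgraph \<Rightarrow> bool" where
  "r_init G H \<longleftrightarrow> (\<exists>v\<in>V G. nmark G v = NGrey \<and>
      H = set_root v True (set_nm v NRed G))"

definition r_unroot :: "hostgraph \<Rightarrow> hostgraph \<Rightarrow> bool" where
  "r_unroot G H \<longleftrightarrow> (\<exists>v\<in>V G. nmark G v = NRed \<and> isroot G v \<and>
      H = set_root v False (set_nm v NBlue G))"

definition r_set_flag :: "hostgraph \<Rightarrow> hostgraph \<Rightarrow> bool" where
  "r_set_flag G H \<longleftrightarrow> (\<exists>v\<in>V G. nmark G v = NRed \<and> isroot G v \<and>
      H = set_nm v NGreen G)"

definition r_flag :: "hostgraph \<Rightarrow> hostgraph \<Rightarrow> bool" where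
  "r_flag G H \<longleftrightarrow> (\<exists>v\<in>V G. nmark G v = NGreen \<and> isroot G v) \<and> H = G"

definition r_next_edge :: "hostgraph \<Rightarrow> hostgraph \<Rightarrow> bool" where
  "r_next_edge G H \<longleftrightarrow> (\<exists>v1\<in>V G. \<exists>v2\<in>V G. \<exists>e\<in>E G. v1 \<noteq> v2 \<and>
      nmark G v1 = NRed \<and> isroot G v1 \<and>
      src G e = v1 \<and> tgt G e = v2 \<and> emark G e = EUnmarked \<and>
      H = set_em e ERed G)"

definition r_ignore :: "hostgraph \<Rightarrow> hostgraph \<Rightarrow> bool" where
  "r_ignore G H \<longleftrightarrow> (\<exists>v1\<in>V G. \<exists>v2\<in>V G. \<exists>e\<in>E G. v1 \<noteq> v2 \<and>
      nmark G v1 = NRed \<and> isroot G v1 \<and> nmark G v2 = NBlue \<and>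
      src G e = v1 \<and> tgt G e = v2 \<and> emark G e = ERed \<and>
      H = set_em e EBlue G)"

definition r_move :: "hostgraph \<Rightarrow> hostgraph \<Rightarrow> bool" where
  "r_move G H \<longleftrightarrow> (\<exists>v1\<in>V G. \<exists>v2\<in>V G. \<exists>e\<in>E G. v1 \<noteq> v2 \<and>
      nmark G v1 = NRed \<and> isroot G v1 \<and> nmark G v2 = NGrey \<and>
      src G e = v1 \<and> tgt G e = v2 \<and> emark G e = ERed \<and>
      H = set_em e EDashed (set_root v2 True (set_nm v2 NRed
            (set_root v1 False G))))"

definition r_back :: "hostgraph \<Rightarrow> hostgraph \<Rightarrow> bool" where
  "r_back G H \<longleftrightarrow> (\<exists>v1\<in>V G. \<exists>v2\<in>V G. \<exists>e\<in>E G. v1 \<noteq> v2 \<and>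
      nmark G v1 = NRed \<and> nmark G v2 = NRed \<and> isroot G v2 \<and>
      src G e = v1 \<and> tgt G e = v2 \<and> emark G e = EDashed \<and>
      H = set_em e EBlue (set_root v2 False (set_nm v2 NBlue
            (set_root v1 True G))))"

definition r_loop :: "hostgraph \<Rightarrow> hostgraph \<Rightarrow> bool" where
  "r_loop G H \<longleftrightarrow> (\<exists>v\<in>V G. \<exists>e\<in>E G.
      nmark G v = NRed \<and> isroot G v \<and>
      src G e = v \<and> tgt G e = v \<and> emark G e = EUnmarked \<and>
      H = set_nm v NGreen G)"

text \<open>A rule-set call is given by the union of the application relations of
  its rules.\<close>
datatype cmd =
    Call "hostgraph \<Rightarrow> hostgraph \<Rightarrow> bool"
  | Seq cmd cmd
  | Loop cmd
  | Try cmd cmd cmd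
  | IfC cmd cmd cmd
  | Skip
  | FailC
  | Break

datatype outcome = Res hostgraph | Brk hostgraph | Failed

text \<open>Big-step (nondeterministic) semantics: outcomes of finished executions.\<close>
inductive exec :: "cmd \<Rightarrow> hostgraph \<Rightarrow> outcome \<Rightarrow> bool" where
  call_ok: "R G H \<Longrightarrow> exec (Call R) G (Res H)"
| call_fail: "(\<forall>H. \<not> R G H) \<Longrightarrow> exec (Call R) G Failed"
| seq_res: "exec P G (Res H) \<Longrightarrow> exec Q H out \<Longrightarrow> exec (Seq P Q) G out"
| seq_brk: "exec P G (Brk H) \<Longrightarrow> exec (Seq P Q) G (Brk H)"
| seq_fail: "exec P G Failed \<Longrightarrow> exec (Seq P Q) G Failed"
| loop_step: "exec P G (Res H) \<Longrightarrow> exec (Loop P) H out \<Longrightarrow> exec (Loop P) G out"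
| loop_brk: "exec P G (Brk H) \<Longrightarrow> exec (Loop P) G (Res H)"
| loop_fail: "exec P G Failed \<Longrightarrow> exec (Loop P) G (Res G)"
| try_res: "exec C G (Res H) \<Longrightarrow> exec P H out \<Longrightarrow> exec (Try C P Q) G out"
| try_brk: "exec C G (Brk H) \<Longrightarrow> exec (Try C P Q) G (Brk H)"
| try_fail: "exec C G Failed \<Longrightarrow> exec Q G out \<Longrightarrow> exec (Try C P Q) G out"
| if_res: "exec C G (Res H) \<Longrightarrow> exec P G out \<Longrightarrow> exec (IfC C P Q) G out"
| if_brk: "exec C G (Brk H) \<Longrightarrow> exec (IfC C P Q) G (Brk G)"
| if_fail: "exec C G Failed \<Longrightarrow> exec Q G out \<Longrightarrow> exec (IfC C P Q) G out"
| skip: "exec Skip G (Res G)"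
| fail: "exec FailC G Failed"
| brk: "exec Break G (Brk G)"

text \<open>Termination: every execution of the command from the given graph is
  finite (least fixed point: no infinite iteration of any loop along any
  nondeterministic branch).\<close>
inductive terminates :: "cmd \<Rightarrow> hostgraph \<Rightarrow> bool" where
  "terminates (Call R) G"
| "terminates P G \<Longrightarrow> (\<forall>H. exec P G (Res H) \<longrightarrow> terminates Q H)
     \<Longrightarrow> terminates (Seq P Q) G"
| "terminates P G \<Longrightarrow> (\<forall>H. exec P G (Res H) \<longrightarrow> terminates (Loop P) H)
     \<Longrightarrow> terminates (Loop P) G"
| "terminates C G \<Longrightarrow> (\<forall>H. exec C G (Res H) \<longrightarrow> terminates P H)
     \<Longrightarrow> (exec C G Failed \<longrightarrow> terminates Q G) \<Longrightarrow> terminates (Try C P Q) G"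
| "terminates C G \<Longrightarrow> ((\<exists>H. exec C G (Res H)) \<longrightarrow> terminates P G)
     \<Longrightarrow> (exec C G Failed \<longrightarrow> terminates Q G) \<Longrightarrow> terminates (IfC C P Q) G"
| "terminates Skip G"
| "terminates FailC G"
| "terminates Break G"

definition try1 :: "cmd \<Rightarrow> cmd" where "try1 C = Try C Skip Skip"

definition DFS :: cmd where
  "DFS = Try (Call r_next_edge)
            (Try (Call (\<lambda>G H. r_move G H \<or> r_ignore G H)) Skip
                 (Seq (Call r_set_flag) Break))
            (Seq (try1 (Call r_loop)) (Try (Call r_back) Skip Break))"

definition Check :: cmd where
  "Check = IfC (Call r_flag) FailC Skip"

definition is_dag :: cmd where
  "is_dag = Seq (Loop (Seq (Call r_init) (Seq (Loop DFS) (Try (Call r_unroot) Skip Break))))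
               Check"

end

theory Submission
  imports Defs
begin

fun w :: "edgemark \<Rightarrow> nat" where
  "w EUnmarked = 3" | "w ERed = 2" | "w EDashed = 1" | "w EBlue = 0" | "w EGreen = 0"

definition step :: "hostgraph \<Rightarrow> hostgraph \<Rightarrow> bool" where
  "step G H \<longleftrightarrow> V H = V G \<and> E H = E G \<and> (\<forall>v. nmark H v = NGrey \<longrightarrow> nmark G v = NGrey)
     \<and> (\<forall>e. w (emark H e) \<le> w (emark G e))"

lemma step_refl: "step G G" by (simp add: step_def)
lemma step_trans: "step G H \<Longrightarrow> step H K \<Longrightarrow> step G K"
proof -
  assume a: "step G H" "step H K"
  have "\<forall>e. w (emark K e) \<le> w (emark G e)"
  proof
    fix e show "w (emark K e) \<le> w (emark G e)"
      using a unfolding step_def by (meson order_trans)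
  qed
  then show ?thesis using a unfolding step_def by simp
qed

fun good :: "cmd \<Rightarrow> bool" where
  "good (Call R) = (\<forall>G H. R G H \<longrightarrow> step G H)"
| "good (Seq a b) = (good a \<and> good b)"
| "good (Loop a) = good a"
| "good (Try a b c) = (good a \<and> good b \<and> good c)"
| "good (IfC a b c) = (good a \<and> good b \<and> good c)"
| "good _ = True"

lemma exec_step: "exec c G out \<Longrightarrow> good c \<Longrightarrow> (out = Res H \<or> out = Brk H) \<Longrightarrow> step G H"
proof (induction arbitrary: H rule: exec.induct)
  case (seq_res P G H' Q out)
  have "step G H'" using seq_res.IH(1)[of H'] seq_res.prems by simp
  moreover have "step H' H" using seq_res.IH(2)[of H] seq_res.prems by simp
  ultimately show ?case by (rule step_trans)
next
  case (loop_step P G H' out)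
  have "step G H'" using loop_step.IH(1)[of H'] loop_step.prems by simp
  moreover have "step H' H" using loop_step.IH(2)[of H] loop_step.prems by simp
  ultimately show ?case by (rule step_trans)
next
  case (try_res C G H' P out Q)
  have "step G H'" using try_res.IH(1)[of H'] try_res.prems by simp
  moreover have "step H' H" using try_res.IH(2)[of H] try_res.prems by simp
  ultimately show ?case by (rule step_trans)
next
  case (call_ok R G H')
  then show ?case by simp
next
  case (seq_brk P G H' Q)
  then show ?case by simp
next
  case (loop_brk P G H')
  then show ?case by simp
next
  case (try_brk C G H' P Q)
  then show ?case by simp
next
  case (try_fail C G Q out P)
  then show ?case by simp
next
  case (if_res C G H' P out Q)
  then show ?case by simp
next
  case (if_fail C G Q out P)
  then show ?case by simp
qed (auto simp: step_refl)

lemmas defs = r_init_def r_unroot_def r_set_flag_def r_flag_def r_next_edge_def r_ignore_def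
  r_move_def r_back_def r_loop_def set_nm_def set_root_def set_em_def step_def

lemma good_DFS: "good DFS"
  unfolding DFS_def try1_def by (auto simp: defs split: if_splits)

fun loopfree :: "cmd \<Rightarrow> bool" where
  "loopfree (Loop a) = False"
| "loopfree (Seq a b) = (loopfree a \<and> loopfree b)"
| "loopfree (Try a b c) = (loopfree a \<and> loopfree b \<and> loopfree c)"
| "loopfree (IfC a b c) = (loopfree a \<and> loopfree b \<and> loopfree c)"
| "loopfree _ = True"

lemma loopfree_term: "loopfree c \<Longrightarrow> terminates c G"
  by (induction c arbitrary: G) (auto intro: terminates.intros)

inductive_cases try_E: "exec (Try C P Q) G out"
inductive_cases seq_E: "exec (Seq P Q) G out"
inductive_cases call_E: "exec (Call R) G out"
inductive_cases skip_E: "exec Skip G out"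
inductive_cases brk_E: "exec Break G out"

lemma DFS_res: "exec DFS G (Res H) \<Longrightarrow>
  \<exists>G1. (r_next_edge G G1 \<and> (r_move G1 H \<or> r_ignore G1 H)) \<or>
       (exec (try1 (Call r_loop)) G (Res G1) \<and> r_back G1 H)"
  unfolding DFS_def
  by (auto elim!: try_E seq_E call_E skip_E brk_E)

definition wE :: "hostgraph \<Rightarrow> nat" where
  "wE G = (\<Sum>e\<in>E G. w (emark G e))"

definition strictE :: "hostgraph \<Rightarrow> hostgraph \<Rightarrow> bool" where
  "strictE G H \<longleftrightarrow> step G H \<and> (\<exists>e\<in>E G. w (emark H e) < w (emark G e))"

lemma strict_step: "strictE G H \<Longrightarrow> step G H" by (simp add: strictE_def)

lemma strict_chain: "step G G1 \<Longrightarrow> strictE G1 G2 \<Longrightarrow> step G2 H \<Longrightarrow> finite (E G) \<Longrightarrow> wE H < wE G"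
proof -
  assume a: "step G G1" "strictE G1 G2" "step G2 H" "finite (E G)"
  have s12: "step G1 G2" using a(2) by (rule strict_step)
  have s: "step G1 H" using s12 a(3) by (rule step_trans)
  have EH: "E H = E G" using a(1) s unfolding step_def by simp
  have EG1: "E G1 = E G" using a(1) unfolding step_def by simp
  obtain e where e: "e \<in> E G1" "w (emark G2 e) < w (emark G1 e)" using a(2) unfolding strictE_def by blast
  have le: "\<forall>x\<in>E G. w (emark H x) \<le> w (emark G x)"
    using step_trans[OF a(1) s] unfolding step_def by simp
  have l1: "w (emark H e) \<le> w (emark G2 e)" using a(3) unfolding step_def by simp
  have l2: "w (emark G1 e) \<le> w (emark G e)" using a(1) unfolding step_def by simp
  have lt: "\<exists>x\<in>E G. w (emark H x) < w (emark G x)"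
    using e l1 l2 EG1 by (metis le_less_trans less_le_trans)
  have "(\<Sum>x\<in>E G. w (emark H x)) < (\<Sum>x\<in>E G. w (emark G x))"
    by (rule sum_strict_mono_ex1[OF a(4) le lt])
  then show ?thesis unfolding wE_def EH .
qed

lemma strict_ne: "r_next_edge G H \<Longrightarrow> strictE G H"
  unfolding strictE_def by (auto simp: defs split: if_splits)
lemma strict_mv: "r_move G H \<Longrightarrow> strictE G H"
  unfolding strictE_def by (auto simp: defs split: if_splits)
lemma strict_ig: "r_ignore G H \<Longrightarrow> strictE G H"
  unfolding strictE_def by (auto simp: defs split: if_splits)
lemma strict_bk: "r_back G H \<Longrightarrow> strictE G H"
  unfolding strictE_def by (auto simp: defs split: if_splits)


lemma DFS_dec: "exec DFS G (Res H) \<Longrightarrow> finite (E G) \<Longrightarrow> wE H < wE G \<and> step G H"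
proof -
  assume a: "exec DFS G (Res H)" and f: "finite (E G)"
  have st: "step G H" using exec_step[OF a good_DFS] by simp
  from DFS_res[OF a] obtain G1 where
    "(r_next_edge G G1 \<and> (r_move G1 H \<or> r_ignore G1 H)) \<or>
       (exec (try1 (Call r_loop)) G (Res G1) \<and> r_back G1 H)" by blast
  then show ?thesis
  proof
    assume h: "r_next_edge G G1 \<and> (r_move G1 H \<or> r_ignore G1 H)"
    then have "strictE G G1" "step G1 H" using strict_ne strict_mv strict_ig strict_step by blast+
    then show ?thesis using strict_chain[OF step_refl _ _ f] st by blast
  next
    assume h: "exec (try1 (Call r_loop)) G (Res G1) \<and> r_back G1 H"
    have "good (try1 (Call r_loop))" by (auto simp: try1_def defs split: if_splits)
    then have "step G G1" using h exec_step by blast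
    moreover have "strictE G1 H" using h strict_bk by blast
    ultimately show ?thesis using strict_chain[OF _ _ step_refl f] st by blast
  qed
qed

lemma term_loop_DFS: "finite (E G) \<Longrightarrow> terminates (Loop DFS) G"
proof (induction "wE G" arbitrary: G rule: less_induct)
  case less
  have "terminates DFS G" by (rule loopfree_term) (simp add: DFS_def try1_def)
  moreover have "\<forall>H. exec DFS G (Res H) \<longrightarrow> terminates (Loop DFS) H"
  proof (intro allI impI)
    fix H assume "exec DFS G (Res H)"
    then have "wE H < wE G" "step G H" using DFS_dec less.prems by auto
    then show "terminates (Loop DFS) H" using less by (simp add: step_def)
  qed
  ultimately show ?case by (rule terminates.intros)
qed

definition body :: cmd where
  "body = Seq (Call r_init) (Seq (Loop DFS) (Try (Call r_unroot) Skip Break))"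

definition grey :: "hostgraph \<Rightarrow> nat set" where
  "grey G = {v \<in> V G. nmark G v = NGrey}"

lemma good_rest: "good (Seq (Loop DFS) (Try (Call r_unroot) Skip Break))"
  using good_DFS by (auto simp: defs split: if_splits)

lemma body_dec: "exec body G (Res H) \<Longrightarrow> finite (V G) \<Longrightarrow>
   card (grey H) < card (grey G) \<and> step G H"
proof -
  assume a: "exec body G (Res H)" and f: "finite (V G)"
  from a obtain G1 where i: "r_init G G1"
    and r: "exec (Seq (Loop DFS) (Try (Call r_unroot) Skip Break)) G1 (Res H)"
    unfolding body_def by (auto elim!: seq_E call_E intro: exec.seq_res)
  have s1: "step G1 H" using exec_step[OF r good_rest] by simp
  from i obtain v where v: "v \<in> V G" "nmark G v = NGrey" "G1 = set_root v True (set_nm v NRed G)"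
    unfolding r_init_def by blast
  have s0: "step G G1" using v by (auto simp: defs split: if_splits)
  have "grey H \<subseteq> grey G1" using s1 by (auto simp: grey_def step_def)
  moreover have "grey G1 \<subset> grey G" using v by (auto simp: grey_def defs)
  ultimately have "grey H \<subset> grey G" by blast
  moreover have "finite (grey G)" using f by (simp add: grey_def)
  ultimately have "card (grey H) < card (grey G)" by (simp add: psubset_card_mono)
  then show ?thesis using step_trans[OF s0 s1] by simp
qed

lemma term_body: "finite (E G) \<Longrightarrow> terminates body G"
proof -
  assume f: "finite (E G)"
  have "\<forall>H. exec (Call r_init) G (Res H) \<longrightarrow> terminates (Seq (Loop DFS) (Try (Call r_unroot) Skip Break)) H"
  proof (intro allI impI)
    fix H assume "exec (Call r_init) G (Res H)"
    then have "r_init G H" by (auto elim: call_E)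
    then have "E H = E G" by (auto simp: defs split: if_splits)
    then have fH: "finite (E H)" using f by simp
    have "\<forall>K. exec (Loop DFS) H (Res K) \<longrightarrow> terminates (Try (Call r_unroot) Skip Break) K"
      by (intro allI impI loopfree_term) simp
    then show "terminates (Seq (Loop DFS) (Try (Call r_unroot) Skip Break)) H"
      using term_loop_DFS[OF fH] by (rule terminates.intros(2)[rotated])
  qed
  then show ?thesis unfolding body_def by (rule terminates.intros(2)[OF terminates.intros(1)])
qed

lemma term_outer: "finite (E G) \<Longrightarrow> finite (V G) \<Longrightarrow> terminates (Loop body) G"
proof (induction "card (grey G)" arbitrary: G rule: less_induct)
  case less
  have "\<forall>H. exec body G (Res H) \<longrightarrow> terminates (Loop body) H"
  proof (intro allI impI)
    fix H assume "exec body G (Res H)"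
    then have "card (grey H) < card (grey G)" "step G H" using body_dec less.prems by auto
    then show "terminates (Loop body) H" using less by (simp add: step_def)
  qed
  then show ?case by (rule terminates.intros(3)[OF term_body[OF less.prems(1)]])
qed

theorem mainTheorem6:
  assumes "wf_graph G"
    and "\<forall>v\<in>V G. nmark G v = NGrey \<and> \<not> isroot G v"
    and "\<forall>e\<in>E G. emark G e = EUnmarked"
  shows "terminates is_dag G"
proof -
  have f: "finite (E G)" "finite (V G)" using assms(1) by (auto simp: wf_graph_def)
  have "is_dag = Seq (Loop body) Check" by (simp add: is_dag_def body_def)
  moreover have "terminates (Seq (Loop body) Check) G"
  proof (rule terminates.intros)
    show "terminates (Loop body) G" by (rule term_outer[OF f])
    show "\<forall>H. exec (Loop body) G (Res H) \<longrightarrow> terminates Check H"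
      by (intro allI impI loopfree_term) (simp add: Check_def)
  qed
  ultimately show ?thesis by simp
qed

end
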